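(* Let $G$ be a multitriangulation of the projective plane. Then $G$ has a vertex of degree $2$, $3$, $4$ or $6$, or two adjacent vertices of degree $5$.
   Context: A multitriangulation of a surface is a loopless multigraph 2-cell embedded on the surface such that every facial closed walk has length 3. *)

theory Defs
  imports Main
begin

text \<open>Surface embeddings of multigraphs are encoded combinatorially by
generalized (flag) maps: a finite set D of flags with three fixed-point-free
involutions a0 (change vertex), a1 (change edge), a2 (change face), where
a0 and a2 commute and a0 a2 is fixed-point-free.
Every 2-cell embedding of a connected multigraph in a closed surface arises
this way (and conversely).\<close>

inductive_set orb :: "('a \<Rightarrow> 'a) set \<Rightarrow> 'a \<Rightarrow> 'a set" for fs x where
  base: "x \<in> orb fs x"
| step: "y \<in> orb fs x \<Longrightarrow> f \<in> fs \<Longrightarrow> f y \<in> orb fs x"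

definition fp_free_inv :: "'a set \<Rightarrow> ('a \<Rightarrow> 'a) \<Rightarrow> bool" where
  "fp_free_inv D f \<longleftrightarrow> (\<forall>x\<in>D. f x \<in> D \<and> f x \<noteq> x \<and> f (f x) = x)"

definition gmap :: "'a set \<Rightarrow> ('a \<Rightarrow> 'a) \<Rightarrow> ('a \<Rightarrow> 'a) \<Rightarrow> ('a \<Rightarrow> 'a) \<Rightarrow> bool" where
  "gmap D a0 a1 a2 \<longleftrightarrow> finite D \<and> D \<noteq> {} \<and>
     fp_free_inv D a0 \<and> fp_free_inv D a1 \<and> fp_free_inv D a2 \<and>
     (\<forall>x\<in>D. a0 (a2 x) = a2 (a0 x) \<and> a0 (a2 x) \<noteq> x)"

definition gmap_connected :: "'a set \<Rightarrow> ('a \<Rightarrow> 'a) \<Rightarrow> ('a \<Rightarrow> 'a) \<Rightarrow> ('a \<Rightarrow> 'a) \<Rightarrow> bool" where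
  "gmap_connected D a0 a1 a2 \<longleftrightarrow> (\<forall>x\<in>D. orb {a0, a1, a2} x = D)"

definition map_vertex :: "('a \<Rightarrow> 'a) \<Rightarrow> ('a \<Rightarrow> 'a) \<Rightarrow> 'a \<Rightarrow> 'a set" where
  "map_vertex a1 a2 x = orb {a1, a2} x"

definition map_edge :: "('a \<Rightarrow> 'a) \<Rightarrow> ('a \<Rightarrow> 'a) \<Rightarrow> 'a \<Rightarrow> 'a set" where
  "map_edge a0 a2 x = orb {a0, a2} x"

definition map_face :: "('a \<Rightarrow> 'a) \<Rightarrow> ('a \<Rightarrow> 'a) \<Rightarrow> 'a \<Rightarrow> 'a set" where
  "map_face a0 a1 x = orb {a0, a1} x"

definition euler_char :: "'a set \<Rightarrow> ('a \<Rightarrow> 'a) \<Rightarrow> ('a \<Rightarrow> 'a) \<Rightarrow> ('a \<Rightarrow> 'a) \<Rightarrow> int" where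
  "euler_char D a0 a1 a2 =
     int (card (map_vertex a1 a2 ` D)) - int (card (map_edge a0 a2 ` D))
     + int (card (map_face a0 a1 ` D))"

definition orientable :: "'a set \<Rightarrow> ('a \<Rightarrow> 'a) \<Rightarrow> ('a \<Rightarrow> 'a) \<Rightarrow> ('a \<Rightarrow> 'a) \<Rightarrow> bool" where
  "orientable D a0 a1 a2 \<longleftrightarrow> (\<exists>c :: 'a \<Rightarrow> bool. \<forall>x\<in>D.
      c (a0 x) \<noteq> c x \<and> c (a1 x) \<noteq> c x \<and> c (a2 x) \<noteq> c x)"

definition projective_plane_map :: "'a set \<Rightarrow> ('a \<Rightarrow> 'a) \<Rightarrow> ('a \<Rightarrow> 'a) \<Rightarrow> ('a \<Rightarrow> 'a) \<Rightarrow> bool" where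
  "projective_plane_map D a0 a1 a2 \<longleftrightarrow> gmap D a0 a1 a2 \<and> gmap_connected D a0 a1 a2 \<and>
     \<not> orientable D a0 a1 a2 \<and> euler_char D a0 a1 a2 = 1"

definition map_loopless :: "'a set \<Rightarrow> ('a \<Rightarrow> 'a) \<Rightarrow> ('a \<Rightarrow> 'a) \<Rightarrow> ('a \<Rightarrow> 'a) \<Rightarrow> bool" where
  "map_loopless D a0 a1 a2 \<longleftrightarrow> (\<forall>x\<in>D. a0 x \<notin> map_vertex a1 a2 x)"

text \<open>Every facial closed walk has length 3 (a face of length k consists of 2k flags).\<close>
definition all_faces_triangles :: "'a set \<Rightarrow> ('a \<Rightarrow> 'a) \<Rightarrow> ('a \<Rightarrow> 'a) \<Rightarrow> bool" where
  "all_faces_triangles D a0 a1 \<longleftrightarrow> (\<forall>x\<in>D. card (map_face a0 a1 x) = 6)"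

definition multitriangulation :: "'a set \<Rightarrow> ('a \<Rightarrow> 'a) \<Rightarrow> ('a \<Rightarrow> 'a) \<Rightarrow> ('a \<Rightarrow> 'a) \<Rightarrow> bool" where
  "multitriangulation D a0 a1 a2 \<longleftrightarrow> map_loopless D a0 a1 a2 \<and> all_faces_triangles D a0 a1"

text \<open>Degree of the vertex containing flag x (each edge-end gives two flags).\<close>
definition map_degree :: "('a \<Rightarrow> 'a) \<Rightarrow> ('a \<Rightarrow> 'a) \<Rightarrow> 'a \<Rightarrow> nat" where
  "map_degree a1 a2 x = card (map_vertex a1 a2 x) div 2"

end

theory Submission
  imports Defs Complex_Main
begin

lemma orb_closed:
  assumes "x \<in> S" "\<forall>f\<in>fs. \<forall>y\<in>S. f y \<in> S"
  shows "orb fs x \<subseteq> S"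
proof
  fix y assume "y \<in> orb fs x" then show "y \<in> S"
  proof induction
    case base show ?case by (rule assms(1))
  next
    case (step y f) then show ?case using assms(2) by blast
  qed
qed

lemma orb_trans:
  assumes "y \<in> orb fs x" "z \<in> orb fs y" shows "z \<in> orb fs x"
  using assms(2)
proof induction
  case base show ?case by (rule assms(1))
next
  case (step z f) show ?case by (rule orb.step[OF step.IH step.hyps(2)])
qed

lemma orb_step1: "f \<in> fs \<Longrightarrow> f x \<in> orb fs x"
  by (rule orb.step[OF orb.base])

lemma orb_sym:
  assumes cl: "\<forall>f\<in>fs. \<forall>y\<in>D. f y \<in> D \<and> f (f y) = y" and x: "x \<in> D"
    and y: "y \<in> orb fs x"
  shows "x \<in> orb fs y"
  using y
proof induction
  case base then show ?case by (rule orb.base)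
next
  case (step y f)
  have cl': "\<forall>f\<in>fs. \<forall>y\<in>D. f y \<in> D" using cl by simp
  have yD: "y \<in> D" using orb_closed[OF x cl'] step.hyps(1) by (rule subsetD)
  have e: "f (f y) = y" using cl yD step.hyps(2) by simp
  have "f (f y) \<in> orb fs (f y)" by (rule orb_step1[OF step.hyps(2)])
  then have yf: "y \<in> orb fs (f y)" by (simp only: e)
  show ?case by (rule orb_trans[OF yf step.IH])
qed

lemma orb_eq:
  assumes cl: "\<forall>f\<in>fs. \<forall>y\<in>D. f y \<in> D \<and> f (f y) = y" and x: "x \<in> D"
    and y: "y \<in> orb fs x"
  shows "orb fs y = orb fs x"
proof
  show "orb fs y \<subseteq> orb fs x" by (rule subsetI, rule orb_trans[OF y])
  show "orb fs x \<subseteq> orb fs y" by (rule subsetI, rule orb_trans[OF orb_sym[OF cl x y]])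
qed

lemma card_classes:
  fixes C :: "'a \<Rightarrow> 'a set"
  assumes fin: "finite D" and cx: "\<And>x. x \<in> D \<Longrightarrow> x \<in> C x \<and> C x \<subseteq> D"
    and ceq: "\<And>x y. x \<in> D \<Longrightarrow> y \<in> C x \<Longrightarrow> C y = C x"
  shows "real (card (C ` D)) = (\<Sum>x\<in>D. 1 / real (card (C x)))"
proof -
  have "(\<Sum>x\<in>D. 1 / real (card (C x))) =
        (\<Sum>K\<in>C ` D. \<Sum>x\<in>{x. x \<in> D \<and> C x = K}. 1 / real (card (C x)))"
    by (rule sum.image_gen[OF fin])
  also have "\<dots> = (\<Sum>K\<in>C ` D. 1)"
  proof (rule sum.cong[OF refl])
    fix K assume "K \<in> C ` D"
    then obtain z where z: "z \<in> D" "K = C z" by blast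
    have e: "{x. x \<in> D \<and> C x = K} = K"
      using z cx ceq by blast
    have fK: "finite K" using z cx fin finite_subset by metis
    have nK: "K \<noteq> {}" using z cx by blast
    have "(\<Sum>x\<in>K. 1 / real (card (C x))) = (\<Sum>x\<in>K. 1 / real (card K))"
      using e by (intro sum.cong) auto
    also have "\<dots> = 1" using fK nK by simp
    finally show "(\<Sum>x\<in>{x. x \<in> D \<and> C x = K}. 1 / real (card (C x))) = 1" using e by simp
  qed
  finally show ?thesis by simp
qed


lemma face_id:
  assumes f0: "fp_free_inv D a0" and f1: "fp_free_inv D a1" and f2: "fp_free_inv D a2"
    and fin: "finite D"
    and loop: "map_loopless D a0 a1 a2" and tri: "all_faces_triangles D a0 a1"
    and x: "x \<in> D"
  shows "a0 (a1 (a0 x)) = a1 (a0 (a1 x))"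
proof -
  let ?V = "\<lambda>z. orb {a1, a2} z"
  have clV: "\<forall>f\<in>{a1,a2}. \<forall>y\<in>D. f y \<in> D \<and> f (f y) = y" using f1 f2 unfolding fp_free_inv_def by auto
  have V1: "\<And>z. z \<in> D \<Longrightarrow> ?V (a1 z) = ?V z" using orb_eq[OF clV] orb_step1 by (metis insertI1)
  have nl: "\<And>z. z \<in> D \<Longrightarrow> ?V (a0 z) \<noteq> ?V z"
    using loop orb.base unfolding map_loopless_def map_vertex_def by metis
  have D0: "\<And>z. z \<in> D \<Longrightarrow> a0 z \<in> D \<and> a0 z \<noteq> z \<and> a0 (a0 z) = z" using f0 unfolding fp_free_inv_def by auto
  have D1: "\<And>z. z \<in> D \<Longrightarrow> a1 z \<in> D \<and> a1 z \<noteq> z \<and> a1 (a1 z) = z" using f1 unfolding fp_free_inv_def by auto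
  define x1 where "x1 = a0 x"
  define x2 where "x2 = a1 x1"
  define x3 where "x3 = a0 x2"
  define y1 where "y1 = a1 x"
  define y2 where "y2 = a0 y1"
  define y3 where "y3 = a1 y2"
  have inD: "x1 \<in> D" "x2 \<in> D" "x3 \<in> D" "y1 \<in> D" "y2 \<in> D" "y3 \<in> D"
    using D0 D1 x unfolding x1_def x2_def x3_def y1_def y2_def y3_def by auto
  let ?F = "orb {a0, a1} x"
  have Fin: "x \<in> ?F" "x1 \<in> ?F" "x2 \<in> ?F" "x3 \<in> ?F" "y1 \<in> ?F" "y2 \<in> ?F" "y3 \<in> ?F"
    unfolding x1_def x2_def x3_def y1_def y2_def y3_def
    by (meson insertI1 insertCI orb.base orb.step)+
  have cF: "card ?F = 6" using tri x unfolding all_faces_triangles_def map_face_def by auto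
  have "?F \<subseteq> D" by (rule orb_closed) (use x D0 D1 in auto)
  then have finF: "finite ?F" using fin finite_subset by blast
  have vA: "?V y1 = ?V x" "?V x2 = ?V x1" using V1 x inD unfolding x2_def y1_def by auto
  have vB: "?V x1 \<noteq> ?V x" "?V x3 \<noteq> ?V x2" "?V y2 \<noteq> ?V y1"
    using nl x inD unfolding x1_def x3_def y2_def by auto
  have eq: "a0 x = x1" "a1 x1 = x2" "a0 x2 = x3" "a1 x = y1" "a0 y1 = y2" "a1 y2 = y3"
     "a0 x1 = x" "a1 x2 = x1" "a0 x3 = x2" "a1 y1 = x" "a0 y2 = y1" "a1 y3 = y2"
    using D0 D1 x unfolding x1_def x2_def x3_def y1_def y2_def y3_def by auto
  have fp: "x \<noteq> x1" "x1 \<noteq> x2" "x2 \<noteq> x3" "x \<noteq> y1" "y1 \<noteq> y2" "y2 \<noteq> y3"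
    using D0 D1 x inD unfolding x1_def x2_def x3_def y1_def y2_def y3_def by metis+
  have i0: "\<And>u v. u \<in> D \<Longrightarrow> v \<in> D \<Longrightarrow> (a0 u = a0 v) = (u = v)" using D0 by metis
  have i1: "\<And>u v. u \<in> D \<Longrightarrow> v \<in> D \<Longrightarrow> (a1 u = a1 v) = (u = v)" using D1 by metis
  have n4: "x3 \<noteq> y1"
  proof
    assume e: "x3 = y1"
    have "?F \<subseteq> {x, x1, x2, x3}"
      by (rule orb_closed) (use e eq in auto)
    then have "card ?F \<le> card {x, x1, x2, x3}" by (rule card_mono[rotated]) simp
    also have "\<dots> \<le> 4" by (simp add: card_insert_if)
    finally show False using cF by simp
  qed
  have v1: "x \<noteq> x2" "x1 \<noteq> y1" "x2 \<noteq> y1" using vA vB by auto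
  have d2: "x \<noteq> x3" using i0[of x x3] eq fp x inD by auto
  have d3: "x \<noteq> y2" using i0[of x y2] eq v1 x inD by auto
  have d4: "x1 \<noteq> x3" using i0[of x1 x3] eq v1 x inD by auto
  have d5: "x1 \<noteq> y2" using i0[of x1 y2] eq fp x inD by auto
  have d6: "x2 \<noteq> y2" using i0[of x2 y2] eq n4 x inD by auto
  have d7: "x3 \<noteq> y2" using i0[of x3 y2] eq v1 x inD by auto
  have c6: "card {x, x1, x2, x3, y1, y2} = 6" using fp v1 n4 d2 d3 d4 d5 d6 d7 by simp
  have "{x, x1, x2, x3, y1, y2} = ?F"
    using card_subset_eq[OF finF, of "{x, x1, x2, x3, y1, y2}"] c6 cF Fin by auto
  then have "y3 \<in> {x, x1, x2, x3, y1, y2}" using Fin by auto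
  moreover have "y3 \<noteq> x"
  proof
    assume "y3 = x" then have "a1 y3 = a1 x" by simp
    then have "y2 = y1" by (simp only: eq)
    then show False using fp by simp
  qed
  moreover have "y3 \<noteq> x1"
  proof
    assume "y3 = x1" then have "a1 y3 = a1 x1" by simp
    then have "y2 = x2" by (simp only: eq)
    then show False using d6 by simp
  qed
  moreover have "y3 \<noteq> x2"
  proof
    assume "y3 = x2" then have "a1 y3 = a1 x2" by simp
    then have "y2 = x1" by (simp only: eq)
    then show False using d5 by simp
  qed
  moreover have "y3 \<noteq> y1"
  proof
    assume "y3 = y1" then have "a1 y3 = a1 y1" by simp
    then have "y2 = x" by (simp only: eq)
    then show False using d3 by simp
  qed
  moreover have "y3 \<noteq> y2" using fp by auto
  ultimately have "y3 = x3" by blast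
  then show ?thesis unfolding x1_def x2_def x3_def y1_def y2_def y3_def by simp
qed


theorem lemma2p17:
  fixes D :: "'a set" and a0 a1 a2 :: "'a \<Rightarrow> 'a"
  assumes "projective_plane_map D a0 a1 a2"
    and "multitriangulation D a0 a1 a2"
  shows "(\<exists>x\<in>D. map_degree a1 a2 x \<in> {2, 3, 4, 6}) \<or>
         (\<exists>x\<in>D. map_degree a1 a2 x = 5 \<and> map_degree a1 a2 (a0 x) = 5)"
proof (rule ccontr)
  assume H: "\<not> ?thesis"
  have g: "gmap D a0 a1 a2" and eu: "euler_char D a0 a1 a2 = 1"
    using assms(1) unfolding projective_plane_map_def by simp_all
  have fin: "finite D" and f0: "fp_free_inv D a0" and f1: "fp_free_inv D a1" and f2: "fp_free_inv D a2"
    using g unfolding gmap_def by simp_all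
  have comm: "\<forall>x\<in>D. a0 (a2 x) = a2 (a0 x) \<and> a0 (a2 x) \<noteq> x"
    using g[unfolded gmap_def] by (rule conjunct2[OF conjunct2[OF conjunct2[OF conjunct2[OF conjunct2]]]])
  have loop: "map_loopless D a0 a1 a2" and tri: "all_faces_triangles D a0 a1"
    using assms(2) unfolding multitriangulation_def by simp_all
  let ?V = "\<lambda>z. orb {a1, a2} z"
  define deg where "deg = (\<lambda>z. card (?V z) div 2)"
  have degd: "map_degree a1 a2 = deg" unfolding deg_def map_degree_def map_vertex_def by auto
  have H1: "\<And>x. x \<in> D \<Longrightarrow> deg x \<notin> {2,3,4,6}" using H degd by auto
  have H2: "\<And>x. x \<in> D \<Longrightarrow> deg x = 5 \<Longrightarrow> deg (a0 x) \<noteq> 5" using H degd by auto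
  have D0: "\<And>z. z \<in> D \<Longrightarrow> a0 z \<in> D \<and> a0 z \<noteq> z \<and> a0 (a0 z) = z" using f0 unfolding fp_free_inv_def by auto
  have D1: "\<And>z. z \<in> D \<Longrightarrow> a1 z \<in> D \<and> a1 z \<noteq> z \<and> a1 (a1 z) = z" using f1 unfolding fp_free_inv_def by auto
  have D2: "\<And>z. z \<in> D \<Longrightarrow> a2 z \<in> D \<and> a2 z \<noteq> z \<and> a2 (a2 z) = z" using f2 unfolding fp_free_inv_def by auto
  have clV: "\<forall>f\<in>{a1,a2}. \<forall>y\<in>D. f y \<in> D \<and> f (f y) = y" using D1 D2 by auto
  have Veq: "\<And>x y. x \<in> D \<Longrightarrow> y \<in> ?V x \<Longrightarrow> ?V y = ?V x" using orb_eq[OF clV] by blast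
  have Vsub: "\<And>x. x \<in> D \<Longrightarrow> ?V x \<subseteq> D" using orb_closed[of _ D "{a1,a2}"] clV by blast
  have V1: "\<And>z. z \<in> D \<Longrightarrow> ?V (a1 z) = ?V z" using Veq orb_step1 by (metis insertI1)
  have V2: "\<And>z. z \<in> D \<Longrightarrow> ?V (a2 z) = ?V z" using Veq orb_step1 by (metis insertI1 insertCI)
  have nl: "\<And>z. z \<in> D \<Longrightarrow> ?V (a0 z) \<noteq> ?V z"
    using loop orb.base unfolding map_loopless_def map_vertex_def by metis
  have face: "\<And>x. x \<in> D \<Longrightarrow> a0 (a1 (a0 x)) = a1 (a0 (a1 x))"
    using face_id[OF f0 f1 f2 fin loop tri] by blast
  have finV: "\<And>x. x \<in> D \<Longrightarrow> finite (?V x)" using Vsub fin finite_subset by metis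
  have ge4: "card (?V x) \<ge> 4" if x: "x \<in> D" for x
  proof (rule ccontr)
    assume lt: "\<not> card (?V x) \<ge> 4"
    have e: "a2 x = a1 x"
    proof (rule ccontr)
      assume ne: "a2 x \<noteq> a1 x"
      have o1: "a1 x \<in> ?V x" by (rule orb_step1) simp
      have o2: "a2 x \<in> ?V x" by (rule orb_step1) simp
      have o3: "a1 (a2 x) \<in> ?V x" by (rule orb.step[OF o2]) simp
      have sub: "{x, a1 x, a2 x, a1 (a2 x)} \<subseteq> ?V x" using orb.base o1 o2 o3 by simp
      have a2D: "a2 x \<in> D" using D2 x by blast
      have q1: "x \<noteq> a1 x" "x \<noteq> a2 x" "a2 x \<noteq> a1 (a2 x)" "a2 x \<in> D"
        using D1[OF x] D2[OF x] D1[OF a2D] a2D by metis+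
      have q2: "x \<noteq> a1 (a2 x)"
      proof
        assume "x = a1 (a2 x)" then have "a1 x = a1 (a1 (a2 x))" by simp
        then show False using ne D1 q1 by simp
      qed
      have q3: "a1 x \<noteq> a1 (a2 x)"
      proof
        assume "a1 x = a1 (a2 x)" then have "a1 (a1 x) = a1 (a1 (a2 x))" by simp
        then show False using D1 q1 x by simp
      qed
      have "card {x, a1 x, a2 x, a1 (a2 x)} = 4"
        using ne q1 q2 q3 by auto
      then show False using card_mono[OF finV[OF x] sub] lt by simp
    qed
    have "a0 (a1 x) = a2 (a0 x)" using comm x e by metis
    then have A: "?V (a0 (a1 x)) = ?V (a0 x)" using V2 D0 x by metis
    define z where "z = a1 (a0 x)"
    have zD: "z \<in> D" using D0 D1 x z_def by auto
    have "?V z = ?V (a0 x)" using V1 D0 x z_def by metis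
    moreover have "?V (a0 z) = ?V (a0 (a1 x))" using face[OF x] V1 D0 D1 x z_def by metis
    ultimately show False using nl[OF zD] A by simp
  qed

  let ?E = "\<lambda>z. orb {a0, a2} z"
  have Eset: "?E x = {x, a0 x, a2 x, a0 (a2 x)}" if x: "x \<in> D" for x
  proof
    show "?E x \<subseteq> {x, a0 x, a2 x, a0 (a2 x)}"
      apply (rule orb_closed) using D0 D2 comm x by auto
    have o1: "a0 x \<in> ?E x" by (rule orb_step1) simp
    have o2: "a2 x \<in> ?E x" by (rule orb_step1) simp
    have o3: "a0 (a2 x) \<in> ?E x" by (rule orb.step[OF o2]) simp
    show "{x, a0 x, a2 x, a0 (a2 x)} \<subseteq> ?E x" using orb.base o1 o2 o3 by simp
  qed
  have Ecard: "card (?E x) = 4" if x: "x \<in> D" for x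
  proof -
    have a2D: "a2 x \<in> D" using D2 x by blast
    have q1: "x \<noteq> a0 x" "x \<noteq> a2 x" "a2 x \<noteq> a0 (a2 x)" "a2 x \<in> D" "a0 (a2 x) \<noteq> x"
      using D0[OF x] D2[OF x] D0[OF a2D] a2D comm x by metis+
    have q2: "a0 x \<noteq> a2 x"
    proof
      assume "a0 x = a2 x" then have "a0 (a0 x) = a0 (a2 x)" by simp
      then show False using D0 q1 x by simp
    qed
    have q3: "a0 x \<noteq> a0 (a2 x)"
    proof
      assume "a0 x = a0 (a2 x)" then have "a0 (a0 x) = a0 (a0 (a2 x))" by simp
      then show False using D0 q1 x by simp
    qed
    have "card {x, a0 x, a2 x, a0 (a2 x)} = 4"
      using q1 q2 q3 by auto
    then show ?thesis using Eset[OF x] by simp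
  qed
  have clE: "\<forall>f\<in>{a0,a2}. \<forall>y\<in>D. f y \<in> D \<and> f (f y) = y" using D0 D2 by auto
  have clF: "\<forall>f\<in>{a0,a1}. \<forall>y\<in>D. f y \<in> D \<and> f (f y) = y" using D0 D1 by auto
  have cV: "real (card (orb {a1, a2} ` D)) = (\<Sum>x\<in>D. 1 / real (card (orb {a1, a2} x)))"
  proof (rule card_classes[OF fin])
    have cl0: "\<forall>f\<in>{a1, a2}. \<forall>y\<in>D. f y \<in> D" using D0 D1 D2 by simp
    fix x assume x: "x \<in> D"
    show "x \<in> orb {a1, a2} x \<and> orb {a1, a2} x \<subseteq> D" by (intro conjI orb.base orb_closed[OF x cl0])
  next
    fix x y assume x: "x \<in> D" and y: "y \<in> orb {a1, a2} x"
    have cl: "\<forall>f\<in>{a1, a2}. \<forall>y\<in>D. f y \<in> D \<and> f (f y) = y" using D0 D1 D2 by simp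
    show "orb {a1, a2} y = orb {a1, a2} x" by (rule orb_eq[OF cl x y])
  qed
  have cE: "real (card (orb {a0, a2} ` D)) = (\<Sum>x\<in>D. 1 / real (card (orb {a0, a2} x)))"
  proof (rule card_classes[OF fin])
    have cl0: "\<forall>f\<in>{a0, a2}. \<forall>y\<in>D. f y \<in> D" using D0 D1 D2 by simp
    fix x assume x: "x \<in> D"
    show "x \<in> orb {a0, a2} x \<and> orb {a0, a2} x \<subseteq> D" by (intro conjI orb.base orb_closed[OF x cl0])
  next
    fix x y assume x: "x \<in> D" and y: "y \<in> orb {a0, a2} x"
    have cl: "\<forall>f\<in>{a0, a2}. \<forall>y\<in>D. f y \<in> D \<and> f (f y) = y" using D0 D1 D2 by simp
    show "orb {a0, a2} y = orb {a0, a2} x" by (rule orb_eq[OF cl x y])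
  qed
  have cF: "real (card (orb {a0, a1} ` D)) = (\<Sum>x\<in>D. 1 / real (card (orb {a0, a1} x)))"
  proof (rule card_classes[OF fin])
    have cl0: "\<forall>f\<in>{a0, a1}. \<forall>y\<in>D. f y \<in> D" using D0 D1 D2 by simp
    fix x assume x: "x \<in> D"
    show "x \<in> orb {a0, a1} x \<and> orb {a0, a1} x \<subseteq> D" by (intro conjI orb.base orb_closed[OF x cl0])
  next
    fix x y assume x: "x \<in> D" and y: "y \<in> orb {a0, a1} x"
    have cl: "\<forall>f\<in>{a0, a1}. \<forall>y\<in>D. f y \<in> D \<and> f (f y) = y" using D0 D1 D2 by simp
    show "orb {a0, a1} y = orb {a0, a1} x" by (rule orb_eq[OF cl x y])
  qed
  have cE': "real (card (?E ` D)) = real (card D) / 4" using cE Ecard by simp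
  have cF': "real (card (orb {a0,a1} ` D)) = real (card D) / 6"
    using cF tri unfolding all_faces_triangles_def map_face_def by simp
  have eu': "real (card (?V ` D)) - real (card (?E ` D)) + real (card (orb {a0,a1} ` D)) = 1"
    using eu unfolding euler_char_def map_vertex_def map_edge_def map_face_def by linarith
  define n where "n = (\<lambda>z. real (card (?V z)))"
  have S12: "(\<Sum>x\<in>D. 12 / n x - 1) = 12"
  proof -
    have "(\<Sum>x\<in>D. 12 / n x - 1) = 12 * (\<Sum>x\<in>D. 1 / n x) - real (card D)"
      by (simp add: sum_subtractf sum_distrib_left)
    then show ?thesis using eu' cV cE' cF' unfolding n_def by simp
  qed

  define t where "t = (\<lambda>z. if deg z = 5 then (1::real) / 5 else 0)"
  define w where "w = (\<lambda>x. 12 / n x - 1 + t (a0 x) - t x)"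
  have a0D: "a0 ` D = D" using D0 by (auto, metis image_eqI)
  have inj0: "inj_on a0 D" using D0 by (metis inj_onI)
  have St: "(\<Sum>x\<in>D. t (a0 x)) = (\<Sum>x\<in>D. t x)"
    using sum.reindex[OF inj0, of t] a0D by simp
  have Sw: "(\<Sum>x\<in>D. w x) = 12"
    unfolding w_def using S12 St by (simp add: sum.distrib sum_subtractf)
  have Sw2: "(\<Sum>x\<in>D. w x) = (\<Sum>K\<in>?V ` D. \<Sum>x\<in>{x. x \<in> D \<and> ?V x = K}. w x)"
    by (rule sum.image_gen[OF fin])
  have inner: "(\<Sum>x\<in>{x. x \<in> D \<and> ?V x = K}. w x) \<le> 0" if K: "K \<in> ?V ` D" for K
  proof -
    obtain z where z: "z \<in> D" "K = ?V z" using K by blast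
    have KD: "K \<subseteq> D" using Vsub[OF z(1)] z(2) by simp
    have VK: "\<And>x. x \<in> K \<Longrightarrow> ?V x = K" using Veq[OF z(1)] z(2) by simp
    have zK: "z \<in> K" using z(2) orb.base by simp
    have eK: "{x. x \<in> D \<and> ?V x = K} = K"
    proof (intro subsetI subset_antisym)
      fix x assume "x \<in> {x. x \<in> D \<and> ?V x = K}"
      then have "?V x = K" by simp
      moreover have "x \<in> ?V x" by (rule orb.base)
      ultimately show "x \<in> K" by simp
    next
      fix x assume xK: "x \<in> K"
      then have "x \<in> D" using KD by (rule subsetD[rotated])
      then show "x \<in> {x. x \<in> D \<and> ?V x = K}" using VK[OF xK] by simp
    qed
    have finK: "finite K" using finV[OF z(1)] z(2) by simp
    define m where "m = card K"
    have nK: "\<And>x. x \<in> K \<Longrightarrow> n x = real m" unfolding n_def m_def by (simp add: VK)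
    have dK: "\<And>x. x \<in> K \<Longrightarrow> deg x = m div 2" unfolding deg_def m_def by (simp add: VK)
    have m4: "m \<ge> 4" using ge4[OF z(1)] z(2) unfolding m_def by simp
    have mpos: "real m > 0" using m4 by simp
    have "(\<Sum>x\<in>K. w x) = (\<Sum>x\<in>K. (12 / real m - 1 - t x) + t (a0 x))"
      by (rule sum.cong) (simp_all add: w_def nK)
    also have "\<dots> = (\<Sum>x\<in>K. 12 / real m - 1 - t x) + (\<Sum>x\<in>K. t (a0 x))"
      by (rule sum.distrib)
    also have "\<dots> \<le> 0"
    proof (cases "m div 2 = 5")
      case True
      have t0: "(\<Sum>x\<in>K. t (a0 x)) = 0"
        using H2 dK KD True unfolding t_def by (intro sum.neutral) auto
      have "(\<Sum>x\<in>K. 12 / real m - 1 - t x) = real m * (12 / real m - 1 - 1/5)"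
        using dK True unfolding t_def m_def by simp
      also have "\<dots> = 12 - real m - real m / 5" using mpos by (simp add: field_simps)
      also have "\<dots> \<le> 0" using True by linarith
      finally show ?thesis using t0 by simp
    next
      case False
      have "deg z \<notin> {2,3,4,6}" using H1[OF z(1)] .
      then have "m div 2 \<notin> {2,3,4,6}" using dK[OF zK] by simp
      then have m14: "m \<ge> 14" using False m4 by auto
      have tK: "(\<Sum>x\<in>K. 12 / real m - 1 - t x) = 12 - real m"
        using dK False mpos unfolding t_def m_def by (simp add: right_diff_distrib)
      define B where "B = {x \<in> K. deg (a0 x) = 5}"
      have tB: "(\<Sum>x\<in>K. t (a0 x)) = real (card B) / 5"
        unfolding t_def B_def using sum.inter_filter[OF finK, of "\<lambda>_. (1::real)/5" "\<lambda>x. deg (a0 x) = 5"]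
        by simp
      have finB: "finite B" using finK B_def by simp
      have BK1: "B \<subseteq> K" using B_def by auto
      have BK2: "a1 ` B \<subseteq> K"
      proof (rule image_subsetI)
        fix y assume "y \<in> B" then have yK: "y \<in> K" using BK1 by blast
        have "a1 y \<in> ?V y" by (rule orb_step1) simp
        then show "a1 y \<in> K" using VK[OF yK] by simp
      qed
      note BK = BK1 BK2
      have injB: "inj_on a1 B" using D1 BK KD by (metis inj_onI subsetD)
      have disj: "B \<inter> a1 ` B = {}"
      proof (rule ccontr)
        assume "B \<inter> a1 ` B \<noteq> {}"
        then obtain y where y: "y \<in> B" "a1 y \<in> B" by blast
        have yD: "y \<in> D" "a1 y \<in> D" using y BK KD by auto
        define u where "u = a1 (a0 y)"
        have uD: "u \<in> D" using D0 D1 yD u_def by auto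
        have "deg u = deg (a0 y)" unfolding deg_def u_def using V1[of "a0 y"] D0[OF yD(1)] by simp
        then have du: "deg u = 5" using y B_def by simp
        have "a0 u = a1 (a0 (a1 y))" using face yD u_def by simp
        then have "deg (a0 u) = deg (a0 (a1 y))" unfolding deg_def using V1[of "a0 (a1 y)"] D0[OF yD(2)] by simp
        then have "deg (a0 u) = 5" using y B_def by simp
        then show False using H2 uD du by simp
      qed
      have "card B + card (a1 ` B) \<le> m"
        using card_Un_disjoint[OF finB finite_imageI[OF finB] disj] card_mono[OF finK, of "B \<union> a1 ` B"] BK
        unfolding m_def by simp
      then have "2 * card B \<le> m" using card_image[OF injB] by simp
      then have "real (card B) \<le> real m / 2" by linarith
      then show ?thesis using tK tB m14 by linarith
    qed
    finally show ?thesis using eK by simp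
  qed
  have "(\<Sum>x\<in>D. w x) \<le> 0" unfolding Sw2 by (rule sum_nonpos) (use inner in blast)
  then show False using Sw by simp
qed
end
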